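(* Let $m\ge 2$ be even and $n$ a multiple of $m$. Every set $S\subseteq\{0,1\}^n$ of mutually incomparable solutions with respect to $m$-COCZ satisfies $|S|\le(n/m+1)^{m/2}$. Moreover, a Pareto-optimal set of $m$-COCZ consisting of mutually incomparable solutions (one solution for each Pareto-optimal fitness vector) is a set of mutually incomparable solutions of maximum cardinality, and its cardinality is exactly $(n/m+1)^{m/2}$.
   Context: $m$-COCZ: $\{0,1\}^n\to\mathbb N_0^m$, $f_k(x)=\sum_{i=1}^{n/2}x_i+g_k(x)$, where the second half $x_{n/2+1},\dots,x_n$ is split into $m/2$ consecutive blocks of length $n/m$, and for block $b\in[m/2]$, $g_{2b-1}(x)$ is the number of ones and $g_{2b}(x)$ the number of zeros in block $b$. All objectives are maximized. $x\succeq y$ iff $f_j(x)\ge f_j(y)$ for all $j$; $x,y$ are incomparable if neither $x\succeq y$ nor $y\succeq x$; $S$ is a set of mutually incomparable solutions if any two distinct elements of $S$ are incomparable. A point is Pareto-optimal if no other point dominates it. *)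

theory Defs
  imports Main
begin

text \<open>Bit strings in {0,1}^n are boolean lists of length n; position p (0-based)
  corresponds to x_{p+1} in the paper. Objectives are indexed k = 1..m.\<close>

definition bitstrings :: "nat \<Rightarrow> bool list set" where
  "bitstrings n = {x. length x = n}"

definition ones_in :: "bool list \<Rightarrow> nat \<Rightarrow> nat \<Rightarrow> nat" where
  "ones_in x i j = card {p. i \<le> p \<and> p < j \<and> x ! p}"

definition zeros_in :: "bool list \<Rightarrow> nat \<Rightarrow> nat \<Rightarrow> nat" where
  "zeros_in x i j = card {p. i \<le> p \<and> p < j \<and> \<not> x ! p}"

text \<open>Block b (1-based, b = 1..m/2) of the second half consists of positions
  n/2 + (b-1)(n/m) + 1, ..., n/2 + b(n/m) (1-based).\<close>
definition block_start :: "nat \<Rightarrow> nat \<Rightarrow> nat \<Rightarrow> nat" where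
  "block_start m n b = n div 2 + (b - 1) * (n div m)"

definition cocz_g :: "nat \<Rightarrow> nat \<Rightarrow> nat \<Rightarrow> bool list \<Rightarrow> nat" where
  "cocz_g m n k x =
     (let b = (k + 1) div 2; s = block_start m n b; e = s + n div m in
      if odd k then ones_in x s e else zeros_in x s e)"

definition cocz_f :: "nat \<Rightarrow> nat \<Rightarrow> nat \<Rightarrow> bool list \<Rightarrow> nat" where
  "cocz_f m n k x = ones_in x 0 (n div 2) + cocz_g m n k x"

definition cocz :: "nat \<Rightarrow> nat \<Rightarrow> bool list \<Rightarrow> nat list" where
  "cocz m n x = map (\<lambda>k. cocz_f m n k x) [1..<m+1]"

definition weakly_dom :: "nat \<Rightarrow> nat \<Rightarrow> bool list \<Rightarrow> bool list \<Rightarrow> bool" where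
  "weakly_dom m n x y = (\<forall>j\<in>{1..m}. cocz_f m n j x \<ge> cocz_f m n j y)"

definition dominates :: "nat \<Rightarrow> nat \<Rightarrow> bool list \<Rightarrow> bool list \<Rightarrow> bool" where
  "dominates m n x y = (weakly_dom m n x y \<and> \<not> weakly_dom m n y x)"

definition incomparable :: "nat \<Rightarrow> nat \<Rightarrow> bool list \<Rightarrow> bool list \<Rightarrow> bool" where
  "incomparable m n x y = (\<not> weakly_dom m n x y \<and> \<not> weakly_dom m n y x)"

definition mutually_incomparable :: "nat \<Rightarrow> nat \<Rightarrow> bool list set \<Rightarrow> bool" where
  "mutually_incomparable m n S =
     (\<forall>x\<in>S. \<forall>y\<in>S. x \<noteq> y \<longrightarrow> incomparable m n x y)"

definition pareto_optimal :: "nat \<Rightarrow> nat \<Rightarrow> bool list \<Rightarrow> bool" where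
  "pareto_optimal m n x =
     (x \<in> bitstrings n \<and> \<not> (\<exists>y\<in>bitstrings n. dominates m n y x))"

end

theory Submission
  imports Defs
begin

lemma oz: "ones_in x s e + zeros_in x s e = e - s"
proof -
  have "{p. s \<le> p \<and> p < e \<and> x ! p} \<union> {p. s \<le> p \<and> p < e \<and> \<not> x ! p} = {s..<e}" by auto
  moreover have "card ({p. s \<le> p \<and> p < e \<and> x ! p} \<union> {p. s \<le> p \<and> p < e \<and> \<not> x ! p})
     = card {p. s \<le> p \<and> p < e \<and> x ! p} + card {p. s \<le> p \<and> p < e \<and> \<not> x ! p}"
    by (rule card_Un_disjoint) auto
  ultimately show ?thesis unfolding ones_in_def zeros_in_def by simp
qed

lemma ones_le: "ones_in x s e \<le> e - s"
proof -
  have "ones_in x s e \<le> card {s..<e}" unfolding ones_in_def by (rule card_mono) auto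
  thus ?thesis by simp
qed

definition ov :: "nat \<Rightarrow> nat \<Rightarrow> bool list \<Rightarrow> nat list" where
  "ov h k x = map (\<lambda>i. ones_in x (h*k+i*k) (h*k+i*k+k)) [0..<h]"

lemma g_eq:
  assumes "m = 2*h" "n = m*k" "j \<in> {1..m}"
  shows "cocz_g m n j x = (if odd j then ov h k x ! ((j+1) div 2 - 1)
                           else k - ov h k x ! ((j+1) div 2 - 1))"
proof -
  have h0: "h > 0" using assms by auto
  have nm: "n div m = k" using assms h0 by simp
  have n2: "n div 2 = h*k" using assms by simp
  define b where "b = (j+1) div 2"
  have b1: "b \<ge> 1" "b - 1 < h" using assms unfolding b_def by auto
  have bs: "block_start m n b = h*k + (b-1)*k" unfolding block_start_def nm n2 by simp
  have ovb: "ov h k x ! (b-1) = ones_in x (h*k+(b-1)*k) (h*k+(b-1)*k+k)"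
    unfolding ov_def using b1 by simp
  have "zeros_in x (h*k+(b-1)*k) (h*k+(b-1)*k+k) = k - ones_in x (h*k+(b-1)*k) (h*k+(b-1)*k+k)"
    using oz[of x "h*k+(b-1)*k" "h*k+(b-1)*k+k"] by simp
  then show ?thesis unfolding cocz_g_def Let_def b_def[symmetric] bs nm ovb by simp
qed

lemma ov_le: "i < h \<Longrightarrow> ov h k x ! i \<le> k"
  unfolding ov_def using ones_le[of x "h*k+i*k" "h*k+i*k+k"] by simp

lemma ov_in: "ov h k x \<in> {xs. set xs \<subseteq> {0..k} \<and> length xs = h}"
  using ov_le[of _ h k x] by (auto simp: ov_def)


lemma part1:
  assumes "m = 2*h" "n = m*k" "S \<subseteq> bitstrings n" "mutually_incomparable m n S"
  shows "card S \<le> (k+1)^h"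
proof -
  have inj: "inj_on (ov h k) S"
  proof (rule inj_onI, rule ccontr)
    fix x y assume xy: "x \<in> S" "y \<in> S" "ov h k x = ov h k y" "x \<noteq> y"
    have inc: "incomparable m n x y" using assms(4) xy unfolding mutually_incomparable_def by blast
    have eq: "cocz_f m n j x + ones_in y 0 (n div 2) = cocz_f m n j y + ones_in x 0 (n div 2)"
      if "j \<in> {1..m}" for j
      using g_eq[OF assms(1,2) that, of x] g_eq[OF assms(1,2) that, of y] xy(3)
      unfolding cocz_f_def by simp
    show False
    proof (cases "ones_in y 0 (n div 2) \<le> ones_in x 0 (n div 2)")
      case True
      hence "weakly_dom m n x y" unfolding weakly_dom_def using eq by fastforce
      thus False using inc unfolding incomparable_def by blast
    next
      case False
      hence "weakly_dom m n y x" unfolding weakly_dom_def using eq by fastforce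
      thus False using inc unfolding incomparable_def by blast
    qed
  qed
  have "card S = card (ov h k ` S)" using card_image[OF inj] by simp
  also have "\<dots> \<le> card {xs. set xs \<subseteq> {0..k} \<and> length xs = h}"
    by (rule card_mono[OF finite_lists_length_eq]) (use ov_in in auto)
  also have "\<dots> = (k+1)^h" by (simp add: card_lists_length_eq)
  finally show ?thesis .
qed


lemma partner:
  assumes "m = 2*h" "n = m*k" "j \<in> {1..m}"
  defines "j' \<equiv> (if odd j then j+1 else j-1)"
  shows "j' \<in> {1..m} \<and> cocz_f m n j y + cocz_f m n j' y = 2 * ones_in y 0 (n div 2) + k"
proof (cases "odd j")
  case True
  then obtain i where i: "j = 2*i+1" by (metis oddE)
  have j': "j+1 \<in> {1..m}" using assms(1,3) i by auto presburger
  have "(j+1+1) div 2 = (j+1) div 2" using i by simp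
  moreover have "(j+1) div 2 - 1 < h" using assms by auto
  ultimately have "cocz_f m n j y + cocz_f m n (j+1) y = 2 * ones_in y 0 (n div 2) + k"
    using g_eq[OF assms(1,2,3), of y] g_eq[OF assms(1,2) j', of y] True ov_le[of "(j+1) div 2 - 1" h k y]
    unfolding cocz_f_def by simp
  thus ?thesis using j' True unfolding j'_def by simp
next
  case False
  then obtain i where i0: "j = 2*i" by (metis evenE)
  then obtain i' where i: "j = 2*i'+2" using assms(3) by (cases i) auto
  have j': "j-1 \<in> {1..m}" using assms i by auto
  have "(j-1+1) div 2 = (j+1) div 2" using i by simp
  moreover have "(j+1) div 2 - 1 < h" using assms by auto
  moreover have "odd (j-1)" using i by simp
  ultimately have "cocz_f m n j y + cocz_f m n (j-1) y = 2 * ones_in y 0 (n div 2) + k"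
    using g_eq[OF assms(1,2,3), of y] g_eq[OF assms(1,2) j', of y] False ov_le[of "(j+1) div 2 - 1" h k y]
    unfolding cocz_f_def by simp
  thus ?thesis using j' False unfolding j'_def by simp
qed

lemma po:
  assumes "m = 2*h" "n = m*k" "x \<in> bitstrings n" "ones_in x 0 (n div 2) = h*k"
  shows "pareto_optimal m n x"
  unfolding pareto_optimal_def dominates_def
proof (intro conjI assms(3) notI)
  assume "\<exists>y\<in>bitstrings n. weakly_dom m n y x \<and> \<not> weakly_dom m n x y"
  then obtain y where y: "weakly_dom m n y x" "\<not> weakly_dom m n x y" by blast
  have Fy: "ones_in y 0 (n div 2) \<le> h*k" using ones_le[of y 0 "n div 2"] assms by simp
  have "cocz_f m n j x \<ge> cocz_f m n j y" if j: "j \<in> {1..m}" for j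
  proof -
    define j' where "j' = (if odd j then j+1 else j-1)"
    have A: "j' \<in> {1..m}" "cocz_f m n j y + cocz_f m n j' y = 2 * ones_in y 0 (n div 2) + k"
      using partner[OF assms(1,2) j, of y] unfolding j'_def by auto
    have B: "cocz_f m n j x + cocz_f m n j' x = 2 * ones_in x 0 (n div 2) + k"
      using partner[OF assms(1,2) j, of x] unfolding j'_def by auto
    have "cocz_f m n j' y \<ge> cocz_f m n j' x" using y(1) A(1) unfolding weakly_dom_def by blast
    thus ?thesis using A B Fy assms(4) by linarith
  qed
  hence "weakly_dom m n x y" unfolding weakly_dom_def by blast
  thus False using y(2) by blast
qed


lemma construct:
  assumes "m = 2*h" "n = m*k" "length v = h" "set v \<subseteq> {0..k}"
  shows "\<exists>x\<in>bitstrings n. ones_in x 0 (n div 2) = h*k \<and> ov h k x = v"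
proof -
  define x where "x = map (\<lambda>p. p < h*k \<or> (p - h*k) mod k < v ! ((p - h*k) div k)) [0..<n]"
  have lx: "length x = n" unfolding x_def by simp
  have xn: "p < n \<Longrightarrow> x ! p = (p < h*k \<or> (p - h*k) mod k < v ! ((p - h*k) div k))" for p
    unfolding x_def by simp
  have n2: "n div 2 = h*k" using assms by simp
  have hkn: "h*k \<le> n" using assms by simp
  have F: "ones_in x 0 (n div 2) = h*k"
  proof -
    have "{p. 0 \<le> p \<and> p < n div 2 \<and> x ! p} = {0..<h*k}" using xn hkn n2 by auto
    thus ?thesis unfolding ones_in_def by simp
  qed
  have O: "ov h k x = v"
  proof (rule nth_equalityI)
    show "length (ov h k x) = length v" using assms by (simp add: ov_def)
    fix i assume "i < length (ov h k x)"
    hence i: "i < h" by (simp add: ov_def)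
    have vi: "v ! i \<le> k" using assms i by (metis atLeastAtMost_iff nth_mem subsetD)
    have ik: "h*k+i*k+k \<le> n"
    proof -
      have "i*k + k \<le> h*k" using i by (metis add.commute mult_Suc less_eq_Suc_le mult_le_mono1)
      thus ?thesis using assms by simp
    qed
    have "{p. h*k+i*k \<le> p \<and> p < h*k+i*k+k \<and> x ! p} = {h*k+i*k..<h*k+i*k + v!i}"
    proof (rule set_eqI, rule iffI)
      fix p assume "p \<in> {h*k+i*k..<h*k+i*k + v!i}"
      hence p: "h*k+i*k \<le> p" "p < h*k+i*k+k" "p < h*k+i*k + v!i" using vi by auto
      then obtain r where r: "p = h*k+i*k+r" "r < k" by (metis add_less_cancel_left le_add_diff_inverse)
      have d: "(p - h*k) div k = i" "(p - h*k) mod k = r" using r by auto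
      have xp: "x ! p = (r < v ! i)" using xn[of p] p ik r d by auto
      show "p \<in> {p. h*k+i*k \<le> p \<and> p < h*k+i*k+k \<and> x ! p}" using p xp r by simp
    next
      fix p assume "p \<in> {p. h*k+i*k \<le> p \<and> p < h*k+i*k+k \<and> x ! p}"
      hence p: "h*k+i*k \<le> p" "p < h*k+i*k+k" "x ! p" by auto
      then obtain r where r: "p = h*k+i*k+r" "r < k" by (metis add_less_cancel_left le_add_diff_inverse)
      have d: "(p - h*k) div k = i" "(p - h*k) mod k = r" using r by auto
      have xp: "x ! p = (r < v ! i)" using xn[of p] p ik r d by auto
      show "p \<in> {h*k+i*k..<h*k+i*k + v!i}" using p xp r by simp
    qed
    hence "ones_in x (h*k+i*k) (h*k+i*k+k) = v ! i" unfolding ones_in_def by simp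
    thus "ov h k x ! i = v ! i" using i by (simp add: ov_def)
  qed
  show ?thesis using lx F O unfolding bitstrings_def by blast
qed


lemma g_cocz:
  assumes "m = 2*h" "n = m*k" "ones_in x 0 (n div 2) = h*k"
  shows "map (\<lambda>i. cocz m n x ! (2*i) - h*k) [0..<h] = ov h k x"
proof (rule nth_equalityI)
  show "length (map (\<lambda>i. cocz m n x ! (2*i) - h*k) [0..<h]) = length (ov h k x)" by (simp add: ov_def)
  fix i assume "i < length (map (\<lambda>i. cocz m n x ! (2*i) - h*k) [0..<h])"
  hence i: "i < h" by simp
  have j: "2*i+1 \<in> {1..m}" using i assms by auto
  have lt: "2*i < length [1..<m+1]" using i assms by simp
  have c: "cocz m n x ! (2*i) = cocz_f m n (2*i+1) x" unfolding cocz_def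
    using nth_map[OF lt, of "\<lambda>k. cocz_f m n k x"] lt by (simp del: upt_Suc)
  have "cocz_f m n (2*i+1) x = h*k + ov h k x ! i"
    unfolding cocz_f_def using g_eq[OF assms(1,2) j, of x] assms(3) by simp
  thus "map (\<lambda>i. cocz m n x ! (2*i) - h*k) [0..<h] ! i = ov h k x ! i" using c i by simp
qed

theorem mainTheorem8:
  fixes m n :: nat
  assumes "m \<ge> 2" and "even m" and "m dvd n"
  shows "(\<forall>S. S \<subseteq> bitstrings n \<and> mutually_incomparable m n S
             \<longrightarrow> card S \<le> (n div m + 1) ^ (m div 2))
       \<and> (\<forall>P. P \<subseteq> bitstrings n \<and> mutually_incomparable m n P
             \<and> (\<forall>x\<in>P. pareto_optimal m n x)
             \<and> cocz m n ` P = cocz m n ` {x. pareto_optimal m n x}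
             \<longrightarrow> (\<forall>S. S \<subseteq> bitstrings n \<and> mutually_incomparable m n S
                      \<longrightarrow> card S \<le> card P)
                 \<and> card P = (n div m + 1) ^ (m div 2))"
proof -
  obtain h where h: "m = 2*h" using assms(2) by blast
  obtain k where k: "n = m*k" using assms(3) by blast
  have hk: "n div m = k" "m div 2 = h" using h k assms(1) by auto
  have P1: "\<forall>S. S \<subseteq> bitstrings n \<and> mutually_incomparable m n S \<longrightarrow> card S \<le> (k+1)^h"
    using part1[OF h k] by blast
  have fin: "finite (bitstrings n)"
  proof -
    have "bitstrings n = {xs. set xs \<subseteq> (UNIV::bool set) \<and> length xs = n}" unfolding bitstrings_def by auto
    thus ?thesis using finite_lists_length_eq[of "UNIV::bool set" n] by simp
  qed
  have P2: "card P = (k+1)^h" if P: "P \<subseteq> bitstrings n" "mutually_incomparable m n P"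
     "cocz m n ` P = cocz m n ` {x. pareto_optimal m n x}" for P
  proof (rule antisym)
    show "card P \<le> (k+1)^h" using P1 P by blast
    define g where "g = (\<lambda>c. map (\<lambda>i. c ! (2*i) - h*k) [0..<h])"
    define L where "L = {xs. set xs \<subseteq> {0..k} \<and> length xs = h}"
    have "L \<subseteq> g ` cocz m n ` P"
    proof
      fix v assume "v \<in> L"
      then obtain x where x: "x \<in> bitstrings n" "ones_in x 0 (n div 2) = h*k" "ov h k x = v"
        using construct[OF h k] unfolding L_def by blast
      have "pareto_optimal m n x" using po[OF h k x(1,2)] .
      hence "cocz m n x \<in> cocz m n ` P" using P(3) by blast
      moreover have "g (cocz m n x) = v" using g_cocz[OF h k x(2)] x(3) unfolding g_def by simp
      ultimately show "v \<in> g ` cocz m n ` P" by blast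
    qed
    have finP: "finite P" using fin P(1) finite_subset by blast
    have "(k+1)^h = card L" unfolding L_def by (simp add: card_lists_length_eq)
    also have "\<dots> \<le> card (g ` cocz m n ` P)" by (rule card_mono) (use \<open>L \<subseteq> _\<close> finP in auto)
    also have "\<dots> \<le> card (cocz m n ` P)" by (rule card_image_le) (use finP in auto)
    also have "\<dots> \<le> card P" by (rule card_image_le) (use finP in auto)
    finally show "(k+1)^h \<le> card P" .
  qed
  show ?thesis unfolding hk using P1 P2 by metis
qed

end
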